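(* Let $(X,\rho)$, $X_0$, $\mu_x^U$, $\mathcal H(U)$, $\mathcal U_0$ be as in the context, and suppose that there exist $\alpha\in(0,1)$ and $K\ge1$ such that for all $U(x_0,R)\in\mathcal U_0$ and all $h\in\mathcal H_b^+(U(x_0,R))$ one has $\sup_{U(x_0,\alpha R)}h\le K\inf_{U(x_0,\alpha R)}h$. Then: 1. For all $U(x_0,R)\in\mathcal U_0$ and all $h\in\mathcal H^+(U(x_0,R))$, $\sup_{U(x_0,\alpha R)}h\le K\inf_{U(x_0,\alpha R)}h$. 2. If for all $U\in\mathcal U(X_0)$ the functions in $\mathcal H_b^+(U)$ are continuous on $U$, then for all $U\in\mathcal U(X_0)$ the functions in $\mathcal H^+(U)$ are continuous on $U$.
   Context: $(X,\rho)$ is a separable metric space; $\mathcal M(X)$ denotes the finite Borel measures on $X$ (also regarded on universally measurable sets), $\|\mu\|:=\mu(X)$, $\varepsilon_x$ the Dirac measure. For open $Y\subseteq X$, $\mathcal U(Y)$ is the set of open $U$ with $\overline U\subseteq Y$. $X_0\subseteq X$ is open. For every $x\in X$ and $U\in\mathcal U(X_0)$ a measure $\mu_x^U\in\mathcal M(X)$ is given such that for all $x$ and $U,V\in\mathcal U(X_0)$: (M0) $\mu_x^U(U)=0$, $\|\mu_x^U\|\le1$, $\mu_x^U=\varepsilon_x$ if $x\notin U$; (M1) $y\mapsto\mu_y^U(E)$ is universally measurable for every Borel $E$, and $\mu_x^U=\int\mu_y^U\,d\mu_x^V(y)$ whenever $V\subseteq U$. For $U\in\mathcal U(X_0)$,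 $\mathcal H(U)$ is the set of universally measurable real functions $h$ on $X$ such that for all $V\in\mathcal U(U)$ and $x\in V$, $h$ is $\mu_x^V$-integrable with $\int h\,d\mu_x^V=h(x)$; $\mathcal H^+(U)$, $\mathcal H_b^+(U)$ are its nonnegative, resp. bounded nonnegative, elements. $U(x,r)$ is the open $\rho$-ball, $R_0(x):=\sup\{r>0:\overline{U(x,r)}\subseteq X_0\}$ for $x\in X_0$, and $\mathcal U_0:=\{U(x,r):x\in X_0,\ r<R_0(x)\}$. *)

theory Defs
  imports "HOL-Analysis.Analysis" "HOL-Probability.Probability"
begin

definition fin_borel :: "'a::metric_space measure \<Rightarrow> bool" where
  "fin_borel \<mu> \<longleftrightarrow> sets \<mu> = sets borel \<and> finite_measure \<mu>"

definition univ_meas_fun :: "('a::metric_space \<Rightarrow> real) \<Rightarrow> bool" where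
  "univ_meas_fun h \<longleftrightarrow> (\<forall>\<mu>. fin_borel \<mu> \<longrightarrow> h \<in> borel_measurable (completion \<mu>))"

definition UU :: "'a::metric_space set \<Rightarrow> 'a set set" where
  "UU Y = {U. open U \<and> closure U \<subseteq> Y}"

text \<open>Standing assumptions (M0) and (M1) on the family mu x U.\<close>
definition kernel_family :: "'a::metric_space set \<Rightarrow> ('a \<Rightarrow> 'a set \<Rightarrow> 'a measure) \<Rightarrow> bool" where
  "kernel_family X0 mu \<longleftrightarrow>
     (\<forall>x U. U \<in> UU X0 \<longrightarrow>
        fin_borel (mu x U) \<and> emeasure (mu x U) U = 0 \<and> emeasure (mu x U) UNIV \<le> 1 \<and>
        (x \<notin> U \<longrightarrow> mu x U = return borel x)) \<and>
     (\<forall>U E. U \<in> UU X0 \<longrightarrow> E \<in> sets borel \<longrightarrow> univ_meas_fun (\<lambda>y. measure (mu y U) E)) \<and>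
     (\<forall>x U V. U \<in> UU X0 \<longrightarrow> V \<in> UU X0 \<longrightarrow> V \<subseteq> U \<longrightarrow>
        (\<forall>E \<in> sets borel. emeasure (mu x U) E =
            (\<integral>\<^sup>+ y. emeasure (mu y U) E \<partial>(completion (mu x V)))))"

definition Harm :: "('a::metric_space \<Rightarrow> 'a set \<Rightarrow> 'a measure) \<Rightarrow> 'a set \<Rightarrow> ('a \<Rightarrow> real) set" where
  "Harm mu U = {h. univ_meas_fun h \<and>
     (\<forall>V \<in> UU U. \<forall>x \<in> V. integrable (completion (mu x V)) h \<and>
        (\<integral> y. h y \<partial>(completion (mu x V))) = h x)}"

definition Harm_plus :: "('a::metric_space \<Rightarrow> 'a set \<Rightarrow> 'a measure) \<Rightarrow> 'a set \<Rightarrow> ('a \<Rightarrow> real) set" where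
  "Harm_plus mu U = {h \<in> Harm mu U. \<forall>x. 0 \<le> h x}"

definition Harm_bplus :: "('a::metric_space \<Rightarrow> 'a set \<Rightarrow> 'a measure) \<Rightarrow> 'a set \<Rightarrow> ('a \<Rightarrow> real) set" where
  "Harm_bplus mu U = {h \<in> Harm_plus mu U. bounded (range h)}"

definition R0 :: "'a::metric_space set \<Rightarrow> 'a \<Rightarrow> ereal" where
  "R0 X0 x = (SUP r \<in> {r. 0 < r \<and> closure (ball x r) \<subseteq> X0}. ereal r)"

definition harnack :: "real \<Rightarrow> real \<Rightarrow> ('a::metric_space \<Rightarrow> real) \<Rightarrow> 'a \<Rightarrow> real \<Rightarrow> bool" where
  "harnack \<alpha> K h x0 R \<longleftrightarrow>
     (SUP y \<in> ball x0 (\<alpha> * R). ereal (h y)) \<le> ereal K * (INF y \<in> ball x0 (\<alpha> * R). ereal (h y))"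

end

theory Submission
  imports Defs
begin

lemma completion_AE_measurable:
  fixes f g :: "'b \<Rightarrow> 'c::topological_space"
  assumes g: "g \<in> borel_measurable (completion M)" and ae: "AE x in completion M. f x = g x"
  shows "f \<in> borel_measurable (completion M)"
proof (rule measurableI)
  fix A :: "'c set" assume A: "A \<in> sets borel"
  show "f -` A \<inter> space (completion M) \<in> sets (completion M)"
  proof (rule completion.in_sets_AE[where A="g -` A \<inter> space (completion M)"])
    show "AE x in completion M. (x \<in> g -` A \<inter> space (completion M)) = (x \<in> f -` A \<inter> space (completion M))"
      using ae by eventually_elim auto
    show "g -` A \<inter> space (completion M) \<in> sets (completion M)"
      using g A measurable_sets by blast
  qed auto
qed auto

lemma fin_borel_space: "fin_borel M \<Longrightarrow> space M = UNIV"
  unfolding fin_borel_def by (metis sets_eq_imp_space_eq space_borel)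

lemma fin_borel_completion_finite: "fin_borel M \<Longrightarrow> finite_measure (completion M)"
proof -
  assume "fin_borel M"
  then have f: "finite_measure M" unfolding fin_borel_def by blast
  have "emeasure (completion M) (space (completion M)) = emeasure M (space M)"
    by (simp add: emeasure_completion)
  then show ?thesis using finite_measure.emeasure_finite[OF f, of "space M"]
    by (intro finite_measureI) simp
qed

lemma kf_fin: "kernel_family X0 mu \<Longrightarrow> W \<in> UU X0 \<Longrightarrow> fin_borel (mu y W)"
  unfolding kernel_family_def by blast

lemma kf_le1: "kernel_family X0 mu \<Longrightarrow> W \<in> UU X0 \<Longrightarrow> emeasure (mu y W) UNIV \<le> 1"
  unfolding kernel_family_def by blast

lemma kf_out: "kernel_family X0 mu \<Longrightarrow> W \<in> UU X0 \<Longrightarrow> y \<notin> W \<Longrightarrow> mu y W = return borel y"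
  unfolding kernel_family_def by blast

lemma kernel_meas:
  assumes kf: "kernel_family X0 mu" and W: "W \<in> UU X0" and M: "fin_borel M"
  shows "(\<lambda>y. mu y W) \<in> completion M \<rightarrow>\<^sub>M subprob_algebra borel"
proof (rule measurable_subprob_algebra)
  fix a
  have fb: "fin_borel (mu a W)" using kf_fin[OF kf W] .
  show "sets (mu a W) = sets borel" using fb unfolding fin_borel_def by blast
  show "subprob_space (mu a W)"
    using kf_le1[OF kf W, of a] fin_borel_space[OF fb] by (intro subprob_spaceI) auto
next
  fix A :: "'a set" assume A: "A \<in> sets borel"
  have um: "univ_meas_fun (\<lambda>y. measure (mu y W) A)"
    using kf W A unfolding kernel_family_def by blast
  have "(\<lambda>y. ennreal (measure (mu y W) A)) \<in> borel_measurable (completion M)"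
    using um M unfolding univ_meas_fun_def by (intro measurable_compose[OF _ measurable_ennreal]) blast
  moreover have "emeasure (mu y W) A = ennreal (measure (mu y W) A)" for y
    using kf_fin[OF kf W, of y] unfolding fin_borel_def
    by (simp add: finite_measure.emeasure_eq_measure)
  ultimately show "(\<lambda>y. emeasure (mu y W) A) \<in> borel_measurable (completion M)"
    by simp
qed

lemma bind_sets:
  assumes kf: "kernel_family X0 mu" and W: "W \<in> UU X0" and M: "fin_borel M"
  shows "sets (bind (completion M) (\<lambda>y. mu y W)) = sets borel"
  using kf_fin[OF kf W] fin_borel_space[OF M] unfolding fin_borel_def
  by (intro sets_bind) auto

lemma bind_fin:
  assumes kf: "kernel_family X0 mu" and W: "W \<in> UU X0" and M: "fin_borel M"
  shows "fin_borel (bind (completion M) (\<lambda>y. mu y W))"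
proof -
  let ?B = "bind (completion M) (\<lambda>y. mu y W)"
  have sB: "sets ?B = sets borel" by (rule bind_sets[OF kf W M])
  have spB: "space ?B = UNIV" using sets_eq_imp_space_eq[OF sB] by simp
  have spM: "space (completion M) \<noteq> {}" using fin_borel_space[OF M] by simp
  have "emeasure ?B UNIV = (\<integral>\<^sup>+y. emeasure (mu y W) UNIV \<partial>completion M)"
    by (rule emeasure_bind[OF spM kernel_meas[OF kf W M]]) simp
  also have "\<dots> \<le> (\<integral>\<^sup>+y. 1 \<partial>completion M)"
    by (intro nn_integral_mono kf_le1[OF kf W])
  also have "\<dots> = emeasure (completion M) (space (completion M))"
    by simp
  also have "\<dots> < \<top>"
    using M unfolding fin_borel_def
    by (metis emeasure_completion finite_measure.emeasure_finite sets.top top.not_eq_extremum)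
  finally have "emeasure ?B (space ?B) \<noteq> \<top>" using spB by simp
  then show ?thesis unfolding fin_borel_def using sB by (auto intro: finite_measureI)
qed

lemma bind_eq:
  assumes kf: "kernel_family X0 mu" and W: "W \<in> UU X0" and V: "V \<in> UU X0" and VW: "V \<subseteq> W"
  shows "bind (completion (mu z V)) (\<lambda>y. mu y W) = mu z W"
proof (rule measure_eqI)
  have M: "fin_borel (mu z V)" by (rule kf_fin[OF kf V])
  show sB: "sets (bind (completion (mu z V)) (\<lambda>y. mu y W)) = sets (mu z W)"
    using bind_sets[OF kf W M] kf_fin[OF kf W] unfolding fin_borel_def by simp
  fix A assume "A \<in> sets (bind (completion (mu z V)) (\<lambda>y. mu y W))"
  then have A: "A \<in> sets borel" using bind_sets[OF kf W M] by simp
  have spM: "space (completion (mu z V)) \<noteq> {}" using fin_borel_space[OF M] by simp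
  have "emeasure (bind (completion (mu z V)) (\<lambda>y. mu y W)) A
      = (\<integral>\<^sup>+y. emeasure (mu y W) A \<partial>completion (mu z V))"
    by (rule emeasure_bind[OF spM kernel_meas[OF kf W M] A])
  also have "\<dots> = emeasure (mu z W) A"
    using kf W V VW A unfolding kernel_family_def by metis
  finally show "emeasure (bind (completion (mu z V)) (\<lambda>y. mu y W)) A = emeasure (mu z W) A" .
qed

lemma kernel_repr:
  fixes f :: "'a::metric_space \<Rightarrow> ennreal"
  assumes kf: "kernel_family X0 mu" and W: "W \<in> UU X0" and M: "fin_borel M"
    and f: "f \<in> borel_measurable (completion (bind (completion M) (\<lambda>y. mu y W)))"
  shows "\<exists>g\<in>borel_measurable borel.
     (AE y in completion M. (\<integral>\<^sup>+x. f x \<partial>completion (mu y W)) = (\<integral>\<^sup>+x. g x \<partial>mu y W)) \<and>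
     (\<integral>\<^sup>+x. f x \<partial>completion (bind (completion M) (\<lambda>y. mu y W))) = (\<integral>\<^sup>+x. g x \<partial>bind (completion M) (\<lambda>y. mu y W))"
proof -
  let ?B = "bind (completion M) (\<lambda>y. mu y W)"
  have sB: "sets ?B = sets borel" by (rule bind_sets[OF kf W M])
  have spM: "space (completion M) \<noteq> {}" using fin_borel_space[OF M] by simp
  have km: "(\<lambda>y. mu y W) \<in> completion M \<rightarrow>\<^sub>M subprob_algebra borel" by (rule kernel_meas[OF kf W M])
  obtain g where g: "g \<in> borel_measurable ?B" and ae: "AE x in ?B. f x = g x"
    using completion_ex_borel_measurable[OF f] by blast
  have gb: "g \<in> borel_measurable borel" using g measurable_cong_sets[OF sB refl] by blast
  obtain N where N: "{x \<in> space ?B. \<not> f x = g x} \<subseteq> N" "emeasure ?B N = 0" "N \<in> sets ?B"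
    by (rule AE_E[OF ae])
  have Nb: "N \<in> sets borel" using N sB by simp
  have "(\<integral>\<^sup>+y. emeasure (mu y W) N \<partial>completion M) = 0"
    using N(2) emeasure_bind[OF spM km Nb] by simp
  moreover have "(\<lambda>y. emeasure (mu y W) N) \<in> borel_measurable (completion M)"
    using measurable_compose[OF km measurable_emeasure_subprob_algebra[OF Nb]] by simp
  ultimately have aeN: "AE y in completion M. emeasure (mu y W) N = 0"
    using nn_integral_0_iff_AE by blast
  have spB: "space ?B = UNIV" using sets_eq_imp_space_eq[OF sB] by simp
  have fbW: "\<And>y. sets (mu y W) = sets borel" using kf_fin[OF kf W] unfolding fin_borel_def by blast
  have "AE y in completion M. (\<integral>\<^sup>+x. f x \<partial>completion (mu y W)) = (\<integral>\<^sup>+x. g x \<partial>mu y W)"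
    using aeN
  proof eventually_elim
    case (elim y)
    have spy: "space (mu y W) = UNIV" using sets_eq_imp_space_eq[OF fbW[of y]] by simp
    have "AE x in mu y W. f x = g x"
    proof (rule AE_I[of _ _ N])
      show "{x \<in> space (mu y W). f x \<noteq> g x} \<subseteq> N" using N(1) spB spy by auto
      show "emeasure (mu y W) N = 0" using elim .
      show "N \<in> sets (mu y W)" using fbW[of y] Nb by simp
    qed
    then have "AE x in completion (mu y W). f x = g x" by (rule AE_completion)
    then have "(\<integral>\<^sup>+x. f x \<partial>completion (mu y W)) = (\<integral>\<^sup>+x. g x \<partial>completion (mu y W))"
      by (rule nn_integral_cong_AE)
    then show ?case by (simp add: nn_integral_completion)
  qed
  moreover have "(\<integral>\<^sup>+x. f x \<partial>completion ?B) = (\<integral>\<^sup>+x. g x \<partial>?B)"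
  proof -
    have "(\<integral>\<^sup>+x. f x \<partial>completion ?B) = (\<integral>\<^sup>+x. g x \<partial>completion ?B)"
      by (rule nn_integral_cong_AE[OF AE_completion[OF ae]])
    then show ?thesis by (simp only: nn_integral_completion)
  qed
  ultimately show ?thesis using gb by blast
qed

lemma kernel_univ:
  fixes f :: "'a::metric_space \<Rightarrow> ennreal"
  assumes kf: "kernel_family X0 mu" and W: "W \<in> UU X0"
    and f: "\<And>M. fin_borel M \<Longrightarrow> f \<in> borel_measurable (completion M)" and M: "fin_borel M"
  shows "(\<lambda>y. \<integral>\<^sup>+x. f x \<partial>completion (mu y W)) \<in> borel_measurable (completion M)"
proof -
  obtain g where gb: "g \<in> borel_measurable borel"
    and ae: "AE y in completion M. (\<integral>\<^sup>+x. f x \<partial>completion (mu y W)) = (\<integral>\<^sup>+x. g x \<partial>mu y W)"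
    using kernel_repr[OF kf W M f[OF bind_fin[OF kf W M]]] by blast
  have cp: "(\<lambda>(x::'a, y). g y) = (\<lambda>p. g (snd p))" by auto
  have "(\<lambda>(x::'a, y). g y) \<in> borel_measurable (completion M \<Otimes>\<^sub>M borel)"
    unfolding cp by (rule measurable_compose[OF measurable_snd gb])
  then have "(\<lambda>y. \<integral>\<^sup>+x. g x \<partial>mu y W) \<in> borel_measurable (completion M)"
    by (rule nn_integral_measurable_subprob_algebra2[where N=borel, OF _ kernel_meas[OF kf W M]])
  then show ?thesis by (rule completion_AE_measurable) (rule ae)
qed

lemma kernel_iter:
  fixes f :: "'a::metric_space \<Rightarrow> ennreal"
  assumes kf: "kernel_family X0 mu" and W: "W \<in> UU X0" and V: "V \<in> UU X0" and VW: "V \<subseteq> W"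
    and f: "\<And>M. fin_borel M \<Longrightarrow> f \<in> borel_measurable (completion M)"
  shows "(\<integral>\<^sup>+y. (\<integral>\<^sup>+x. f x \<partial>completion (mu y W)) \<partial>completion (mu z V)) = (\<integral>\<^sup>+x. f x \<partial>completion (mu z W))"
proof -
  have M: "fin_borel (mu z V)" by (rule kf_fin[OF kf V])
  have B: "bind (completion (mu z V)) (\<lambda>y. mu y W) = mu z W" by (rule bind_eq[OF kf W V VW])
  have f': "f \<in> borel_measurable (completion (bind (completion (mu z V)) (\<lambda>y. mu y W)))"
    unfolding B by (rule f[OF kf_fin[OF kf W]])
  obtain g where gb: "g \<in> borel_measurable borel"
    and ae: "AE y in completion (mu z V). (\<integral>\<^sup>+x. f x \<partial>completion (mu y W)) = (\<integral>\<^sup>+x. g x \<partial>mu y W)"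
    and eq: "(\<integral>\<^sup>+x. f x \<partial>completion (bind (completion (mu z V)) (\<lambda>y. mu y W)))
          = (\<integral>\<^sup>+x. g x \<partial>bind (completion (mu z V)) (\<lambda>y. mu y W))"
    using kernel_repr[OF kf W M f'] by blast
  have "(\<integral>\<^sup>+y. (\<integral>\<^sup>+x. f x \<partial>completion (mu y W)) \<partial>completion (mu z V))
      = (\<integral>\<^sup>+y. (\<integral>\<^sup>+x. g x \<partial>mu y W) \<partial>completion (mu z V))"
    by (rule nn_integral_cong_AE[OF ae])
  also have "\<dots> = (\<integral>\<^sup>+x. g x \<partial>bind (completion (mu z V)) (\<lambda>y. mu y W))"
    by (rule nn_integral_bind[OF gb kernel_meas[OF kf W M], symmetric])
  also have "\<dots> = (\<integral>\<^sup>+x. f x \<partial>completion (mu z W))"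
    using eq B by simp
  finally show ?thesis .
qed

definition trunc :: "('a::metric_space \<Rightarrow> 'a set \<Rightarrow> 'a measure) \<Rightarrow> 'a set \<Rightarrow> ('a \<Rightarrow> real) \<Rightarrow> nat \<Rightarrow> 'a \<Rightarrow> real" where
  "trunc mu W h n x = (\<integral>y. min (h y) (real n) \<partial>completion (mu x W))"

lemma univ_min_meas:
  assumes "univ_meas_fun h" "fin_borel M"
  shows "(\<lambda>y. min (h y) (real n)) \<in> borel_measurable (completion M)"
proof -
  have hm: "h \<in> borel_measurable (completion M)" using assms unfolding univ_meas_fun_def by blast
  show ?thesis by (rule borel_measurable_min[OF borel_measurable_const hm])
qed

lemma univ_min_meas_enn:
  assumes "univ_meas_fun h" "fin_borel M"
  shows "(\<lambda>y. ennreal (min (h y) (real n))) \<in> borel_measurable (completion M)"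
  by (rule measurable_compose[OF univ_min_meas[OF assms] measurable_ennreal])

lemma measure_le1:
  assumes kf: "kernel_family X0 mu" and W: "W \<in> UU X0"
  shows "measure (completion (mu x W)) (space (completion (mu x W))) \<le> 1"
proof -
  have fb: "fin_borel (mu x W)" by (rule kf_fin[OF kf W])
  have sp: "space (mu x W) = UNIV" by (rule fin_borel_space[OF fb])
  have "ennreal (measure (mu x W) UNIV) = emeasure (mu x W) UNIV"
    using fb unfolding fin_borel_def by (simp add: finite_measure.emeasure_eq_measure)
  also have "\<dots> \<le> 1" by (rule kf_le1[OF kf W])
  finally have "measure (mu x W) UNIV \<le> 1" by (simp add: ennreal_le_1)
  moreover have "UNIV \<in> sets (mu x W)" using sets.top[of "mu x W"] sp by simp
  ultimately show ?thesis using sp by simp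
qed

lemma trunc_int:
  assumes kf: "kernel_family X0 mu" and W: "W \<in> UU X0" and h: "univ_meas_fun h" and hp: "\<forall>x. 0 \<le> h x"
  shows "integrable (completion (mu x W)) (\<lambda>y. min (h y) (real n))"
proof -
  interpret finite_measure "completion (mu x W)" by (rule fin_borel_completion_finite[OF kf_fin[OF kf W]])
  show ?thesis
    by (rule integrable_const_bound[where B="real n"]) (use hp univ_min_meas[OF h kf_fin[OF kf W]] in auto)
qed

lemma trunc_bounds:
  assumes kf: "kernel_family X0 mu" and W: "W \<in> UU X0" and h: "univ_meas_fun h" and hp: "\<forall>x. 0 \<le> h x"
  shows "0 \<le> trunc mu W h n x" "trunc mu W h n x \<le> real n"
proof -
  interpret finite_measure "completion (mu x W)" by (rule fin_borel_completion_finite[OF kf_fin[OF kf W]])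
  show "0 \<le> trunc mu W h n x" unfolding trunc_def using hp by (intro Bochner_Integration.integral_nonneg) auto
  have "trunc mu W h n x \<le> (\<integral>y. real n \<partial>completion (mu x W))"
    unfolding trunc_def by (rule integral_mono') auto
  also have "\<dots> \<le> real n"
    using measure_le1[OF kf W, of x] by (simp add: mult_left_le_one_le)
  finally show "trunc mu W h n x \<le> real n" .
qed

lemma trunc_enn:
  assumes kf: "kernel_family X0 mu" and W: "W \<in> UU X0" and h: "univ_meas_fun h" and hp: "\<forall>x. 0 \<le> h x"
  shows "ennreal (trunc mu W h n x) = (\<integral>\<^sup>+y. ennreal (min (h y) (real n)) \<partial>completion (mu x W))"
  unfolding trunc_def using hp
  by (intro nn_integral_eq_integral[symmetric] trunc_int[OF kf W h hp]) auto

lemma trunc_univ: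
  assumes kf: "kernel_family X0 mu" and W: "W \<in> UU X0" and h: "univ_meas_fun h" and hp: "\<forall>x. 0 \<le> h x"
  shows "univ_meas_fun (trunc mu W h n)"
  unfolding univ_meas_fun_def
proof (intro allI impI)
  fix M :: "'a measure" assume M: "fin_borel M"
  have F: "(\<lambda>x. \<integral>\<^sup>+y. ennreal (min (h y) (real n)) \<partial>completion (mu x W)) \<in> borel_measurable (completion M)"
    by (rule kernel_univ[OF kf W univ_min_meas_enn[OF h] M])
  have eq: "trunc mu W h n x = enn2real (\<integral>\<^sup>+y. ennreal (min (h y) (real n)) \<partial>completion (mu x W))" for x
    using trunc_enn[OF kf W h hp, of n x, symmetric] trunc_bounds(1)[OF kf W h hp, of n x] by simp
  show "trunc mu W h n \<in> borel_measurable (completion M)"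
    unfolding eq[abs_def] by (rule borel_measurable_enn2real[OF F])
qed

lemma UU_trans:
  assumes "V \<in> UU W" "W \<in> UU X0"
  shows "V \<in> UU X0" "V \<subseteq> W"
proof -
  have "closure V \<subseteq> W" "open V" "closure W \<subseteq> X0" using assms unfolding UU_def by auto
  moreover have "V \<subseteq> closure V" "W \<subseteq> closure W" by (rule closure_subset)+
  ultimately show "V \<in> UU X0" "V \<subseteq> W" unfolding UU_def by auto
qed

lemma trunc_bplus:
  assumes kf: "kernel_family X0 mu" and W: "W \<in> UU X0" and h: "univ_meas_fun h" and hp: "\<forall>x. 0 \<le> h x"
  shows "trunc mu W h n \<in> Harm_bplus mu W"
proof -
  have bd: "0 \<le> trunc mu W h n x" "trunc mu W h n x \<le> real n" for x
    by (rule trunc_bounds[OF kf W h hp])+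
  have um: "univ_meas_fun (trunc mu W h n)" by (rule trunc_univ[OF kf W h hp])
  have harm: "integrable (completion (mu x V)) (trunc mu W h n) \<and>
      (\<integral>y. trunc mu W h n y \<partial>completion (mu x V)) = trunc mu W h n x"
    if V: "V \<in> UU W" and x: "x \<in> V" for V x
  proof -
    have V0: "V \<in> UU X0" and VW: "V \<subseteq> W" using UU_trans[OF V W] by auto
    interpret finite_measure "completion (mu x V)" by (rule fin_borel_completion_finite[OF kf_fin[OF kf V0]])
    have meas: "trunc mu W h n \<in> borel_measurable (completion (mu x V))"
      using um kf_fin[OF kf V0] unfolding univ_meas_fun_def by blast
    have int: "integrable (completion (mu x V)) (trunc mu W h n)"
      by (rule integrable_const_bound[where B="real n"]) (use bd meas in auto)
    have "ennreal (\<integral>y. trunc mu W h n y \<partial>completion (mu x V))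
        = (\<integral>\<^sup>+y. ennreal (trunc mu W h n y) \<partial>completion (mu x V))"
      by (rule nn_integral_eq_integral[symmetric, OF int]) (use bd in auto)
    also have "\<dots> = (\<integral>\<^sup>+y. (\<integral>\<^sup>+z. ennreal (min (h z) (real n)) \<partial>completion (mu y W)) \<partial>completion (mu x V))"
      by (simp only: trunc_enn[OF kf W h hp])
    also have "\<dots> = (\<integral>\<^sup>+z. ennreal (min (h z) (real n)) \<partial>completion (mu x W))"
      by (rule kernel_iter[OF kf W V0 VW univ_min_meas_enn[OF h]])
    also have "\<dots> = ennreal (trunc mu W h n x)"
      by (rule trunc_enn[OF kf W h hp, symmetric])
    finally have "ennreal (\<integral>y. trunc mu W h n y \<partial>completion (mu x V)) = ennreal (trunc mu W h n x)" .
    moreover have "0 \<le> (\<integral>y. trunc mu W h n y \<partial>completion (mu x V))"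
      using bd by (intro Bochner_Integration.integral_nonneg) auto
    ultimately have "(\<integral>y. trunc mu W h n y \<partial>completion (mu x V)) = trunc mu W h n x"
      using bd(1)[of x] by (simp add: ennreal_inj)
    with int show ?thesis by blast
  qed
  have "bounded (range (trunc mu W h n))"
    unfolding bounded_iff using bd by (intro exI[of _ "real n"]) auto
  then show ?thesis
    unfolding Harm_bplus_def Harm_plus_def Harm_def using um harm bd by blast
qed

lemma trunc_conv:
  assumes kf: "kernel_family X0 mu" and W: "W \<in> UU X0" and h: "univ_meas_fun h" and hp: "\<forall>x. 0 \<le> h x"
    and int: "integrable (completion (mu x W)) h"
  shows "(\<lambda>n. trunc mu W h n x) \<longlonglongrightarrow> (\<integral>y. h y \<partial>completion (mu x W))"
  unfolding trunc_def
proof (rule integral_dominated_convergence[where w=h])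
  show "h \<in> borel_measurable (completion (mu x W))"
    using h kf_fin[OF kf W] unfolding univ_meas_fun_def by blast
  show "(\<lambda>y. min (h y) (real n)) \<in> borel_measurable (completion (mu x W))" for n
    by (rule univ_min_meas[OF h kf_fin[OF kf W]])
  show "integrable (completion (mu x W)) h" by (rule int)
  show "AE y in completion (mu x W). (\<lambda>n. min (h y) (real n)) \<longlonglongrightarrow> h y"
  proof (rule AE_I2)
    fix y
    obtain N where N: "h y \<le> real N" using real_arch_simple by blast
    have "eventually (\<lambda>n. min (h y) (real n) = h y) sequentially"
      unfolding eventually_sequentially using N by (intro exI[of _ N]) auto
    then show "(\<lambda>n. min (h y) (real n)) \<longlonglongrightarrow> h y" by (rule tendsto_eventually)
  qed
  show "AE y in completion (mu x W). norm (min (h y) (real n)) \<le> h y" for n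
    using hp by (intro AE_I2) auto
qed

lemma trunc_le:
  assumes kf: "kernel_family X0 mu" and W: "W \<in> UU X0" and h: "univ_meas_fun h" and hp: "\<forall>x. 0 \<le> h x"
    and int: "integrable (completion (mu x W)) h"
  shows "trunc mu W h n x \<le> (\<integral>y. h y \<partial>completion (mu x W))"
  unfolding trunc_def using int hp by (intro integral_mono') auto

lemma trunc_out:
  assumes kf: "kernel_family X0 mu" and W: "W \<in> UU X0" and h: "univ_meas_fun h" and x: "x \<notin> W"
  shows "trunc mu W h n x = min (h x) (real n)"
proof -
  let ?f = "\<lambda>y. min (h y) (real n)"
  have R: "mu x W = return borel x" by (rule kf_out[OF kf W x])
  have fm: "?f \<in> borel_measurable (completion (return borel x))"
    using univ_min_meas[OF h kf_fin[OF kf W], of n x] R by simp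
  obtain g where g: "g \<in> borel_measurable (return borel x)" and ae: "AE y in return borel x. ?f y = g y"
    using completion_ex_borel_measurable_real[OF fm] by blast
  obtain N where N: "{y \<in> space (return borel x). \<not> ?f y = g y} \<subseteq> N"
      "emeasure (return borel x) N = 0" "N \<in> sets (return borel x)"
    by (rule AE_E[OF ae])
  have "N \<in> sets borel" using N(3) by simp
  then have "x \<notin> N" using N(2) by (simp add: indicator_def split: if_splits)
  then have fx: "?f x = g x" using N(1) by auto
  have "trunc mu W h n x = (\<integral>y. ?f y \<partial>completion (return borel x))"
    unfolding trunc_def R ..
  also have "\<dots> = (\<integral>y. g y \<partial>completion (return borel x))"
    by (rule integral_cong_AE[OF fm measurable_completion[OF g] AE_completion[OF ae]])
  also have "\<dots> = (\<integral>y. g y \<partial>return borel x)"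
    by (rule integral_completion[OF g])
  also have "\<dots> = g x"
    by (rule integral_return) (use g in auto)
  finally show ?thesis using fx by simp
qed

lemma harnack_from_pairs:
  assumes K: "0 < K" and P: "\<And>y z. y \<in> ball x0 (\<alpha> * R) \<Longrightarrow> z \<in> ball x0 (\<alpha> * R) \<Longrightarrow> h y \<le> K * h z"
  shows "harnack \<alpha> K h x0 R"
  unfolding harnack_def
proof (rule SUP_least)
  fix y assume y: "y \<in> ball x0 (\<alpha> * R)"
  have "ereal (h y / K) \<le> (INF z\<in>ball x0 (\<alpha> * R). ereal (h z))"
  proof (rule INF_greatest)
    fix z assume "z \<in> ball x0 (\<alpha> * R)"
    then have "h y \<le> K * h z" using P y by blast
    then show "ereal (h y / K) \<le> ereal (h z)" using K by (simp add: pos_divide_le_eq mult.commute)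
  qed
  then have "ereal K * ereal (h y / K) \<le> ereal K * (INF z\<in>ball x0 (\<alpha> * R). ereal (h z))"
    by (rule ereal_mult_left_mono) (use K in simp)
  moreover have "ereal K * ereal (h y / K) = ereal (h y)" using K by simp
  ultimately show "ereal (h y) \<le> ereal K * (INF z\<in>ball x0 (\<alpha> * R). ereal (h z))" by simp
qed

lemma pairs_from_harnack:
  assumes K: "0 \<le> K" and H: "harnack \<alpha> K h x0 R" and y: "y \<in> ball x0 (\<alpha> * R)" and z: "z \<in> ball x0 (\<alpha> * R)"
  shows "h y \<le> K * h z"
proof -
  have "ereal (h y) \<le> (SUP y\<in>ball x0 (\<alpha> * R). ereal (h y))" by (rule SUP_upper[OF y])
  also have "\<dots> \<le> ereal K * (INF y\<in>ball x0 (\<alpha> * R). ereal (h y))" using H unfolding harnack_def .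
  also have "\<dots> \<le> ereal K * ereal (h z)"
    by (rule ereal_mult_left_mono[OF INF_lower[OF z]]) (use K in simp)
  finally show ?thesis by simp
qed

lemma R0_gt:
  assumes "ereal R < R0 X0 x0"
  obtains r where "R < r" "0 < r" "closure (ball x0 r) \<subseteq> X0"
  using assms unfolding R0_def less_SUP_iff by auto

lemma R0_ge:
  assumes "0 < r" "closure (ball x0 r) \<subseteq> X0"
  shows "ereal r \<le> R0 X0 x0"
  unfolding R0_def by (rule SUP_upper) (use assms in auto)

lemma closure_ball_sub: "closure (ball x (r::real)) \<subseteq> cball x r"
  by (rule closure_minimal[OF ball_subset_cball closed_cball])

lemma part1:
  assumes kf: "kernel_family X0 mu" and a: "0 < \<alpha>" and a1: "\<alpha> < 1" and K: "1 \<le> K"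
    and Hb: "\<forall>x0 R h. x0 \<in> X0 \<longrightarrow> 0 < R \<longrightarrow> ereal R < R0 X0 x0 \<longrightarrow>
            h \<in> Harm_bplus mu (ball x0 R) \<longrightarrow> harnack \<alpha> K h x0 R"
    and x0: "x0 \<in> X0" and R: "0 < R" and RR: "ereal R < R0 X0 x0" and hH: "h \<in> Harm_plus mu (ball x0 R)"
  shows "harnack \<alpha> K h x0 R"
proof -
  obtain r where r: "R < r" "0 < r" "closure (ball x0 r) \<subseteq> X0" using R0_gt[OF RR] by blast
  have h: "univ_meas_fun h" and hp: "\<forall>x. 0 \<le> h x"
    and hh: "\<And>V x. V \<in> UU (ball x0 R) \<Longrightarrow> x \<in> V \<Longrightarrow> integrable (completion (mu x V)) h \<and>
        (\<integral>y. h y \<partial>completion (mu x V)) = h x"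
    using hH unfolding Harm_plus_def Harm_def by auto
  show ?thesis
  proof (rule harnack_from_pairs)
    show "0 < K" using K by simp
    fix y z assume y: "y \<in> ball x0 (\<alpha> * R)" and z: "z \<in> ball x0 (\<alpha> * R)"
    define d where "d = max (dist x0 y) (dist x0 z)"
    have d0: "0 \<le> d" unfolding d_def by (simp add: le_max_iff_disj)
    have dl: "d < \<alpha> * R" using y z unfolding d_def by auto
    define q where "q = d / \<alpha>"
    define R' where "R' = (R + q) / 2"
    have "q < R" unfolding q_def using dl a by (simp add: divide_less_eq mult.commute)
    then have R'1: "d / \<alpha> < R'" and R'2: "R' < R" unfolding R'_def q_def[symmetric] by auto
    have R'0: "0 < R'" using R'1 d0 a by (smt (verit) divide_nonneg_pos)
    have dR': "d < \<alpha> * R'" using R'1 a by (simp add: divide_less_eq mult.commute)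
    define W where "W = ball x0 R'"
    have cW: "closure W \<subseteq> cball x0 R'" unfolding W_def by (rule closure_ball_sub)
    have "cball x0 R' \<subseteq> ball x0 r" using R'2 r(1) by auto
    also have "\<dots> \<subseteq> closure (ball x0 r)" by (rule closure_subset)
    finally have "closure W \<subseteq> X0" using cW r(3) by blast
    then have W0: "W \<in> UU X0" unfolding UU_def W_def by auto
    have WR: "W \<in> UU (ball x0 R)"
      unfolding UU_def W_def using cW R'2 W_def by (auto simp: subset_eq)
    have aR': "\<alpha> * R' < R'" using a1 R'0 by simp
    have yB: "y \<in> ball x0 (\<alpha> * R')" and zB: "z \<in> ball x0 (\<alpha> * R')"
      using dR' unfolding d_def by auto
    have yW: "y \<in> W" and zW: "z \<in> W" using yB zB aR' unfolding W_def by auto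
    have RR': "ereal R' < R0 X0 x0" using R'2 RR by (meson ereal_less_eq(3) le_less order.strict_trans1)
    have hb: "trunc mu W h n \<in> Harm_bplus mu (ball x0 R')" for n
      using trunc_bplus[OF kf W0 h hp, of n] unfolding W_def .
    have hn: "harnack \<alpha> K (trunc mu W h n) x0 R'" for n
      using Hb x0 R'0 RR' hb by blast
    have le: "trunc mu W h n y \<le> K * trunc mu W h n z" for n
      by (rule pairs_from_harnack[OF _ hn yB zB]) (use K in simp)
    have hy: "integrable (completion (mu y W)) h" "(\<integral>u. h u \<partial>completion (mu y W)) = h y"
      using hh[OF WR yW] by auto
    have hz: "integrable (completion (mu z W)) h" "(\<integral>u. h u \<partial>completion (mu z W)) = h z"
      using hh[OF WR zW] by auto
    have cy: "(\<lambda>n. trunc mu W h n y) \<longlonglongrightarrow> h y"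
      using trunc_conv[OF kf W0 h hp hy(1)] hy(2) by simp
    have cz: "(\<lambda>n. K * trunc mu W h n z) \<longlonglongrightarrow> K * h z"
      using tendsto_mult_left[OF trunc_conv[OF kf W0 h hp hz(1)]] hz(2) by simp
    show "h y \<le> K * h z"
      by (rule LIMSEQ_le[OF cy cz]) (use le in auto)
  qed
qed

lemma part2:
  assumes kf: "kernel_family X0 mu" and a: "0 < \<alpha>" and K: "1 \<le> K"
    and P1: "\<forall>x0 R h. x0 \<in> X0 \<longrightarrow> 0 < R \<longrightarrow> ereal R < R0 X0 x0 \<longrightarrow>
            h \<in> Harm_plus mu (ball x0 R) \<longrightarrow> harnack \<alpha> K h x0 R"
    and C: "\<forall>U \<in> UU X0. \<forall>h \<in> Harm_bplus mu U. continuous_on U h"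
    and U: "U \<in> UU X0" and hH: "h \<in> Harm_plus mu U"
  shows "continuous_on U h"
proof -
  have oU: "open U" and cU: "closure U \<subseteq> X0" using U unfolding UU_def by auto
  have UX: "U \<subseteq> X0" using cU closure_subset by blast
  have h: "univ_meas_fun h" and hp: "\<forall>x. 0 \<le> h x"
    and hh: "\<And>V x. V \<in> UU U \<Longrightarrow> x \<in> V \<Longrightarrow> integrable (completion (mu x V)) h \<and>
        (\<integral>y. h y \<partial>completion (mu x V)) = h x"
    using hH unfolding Harm_plus_def Harm_def by auto
  show ?thesis unfolding continuous_on_eq_continuous_at[OF oU]
  proof
    fix x assume xU: "x \<in> U"
    obtain e where e: "0 < e" "cball x e \<subseteq> U" using oU xU open_contains_cball by blast
    define r where "r = e / 2"
    have r0: "0 < r" and re: "r < e" using e unfolding r_def by auto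
    define W where "W = ball x r"
    have cW: "closure W \<subseteq> cball x r" unfolding W_def by (rule closure_ball_sub)
    have "cball x r \<subseteq> cball x e" using re by auto
    then have "closure W \<subseteq> U" using cW e(2) by blast
    then have WU: "W \<in> UU U" unfolding UU_def W_def by auto
    have W0: "W \<in> UU X0" by (rule UU_trans(1)[OF WU U])
    have "closure (ball x e) \<subseteq> X0" using closure_ball_sub[of x e] e(2) UX by blast
    then have "ereal e \<le> R0 X0 x" by (rule R0_ge[OF e(1)])
    moreover have "ereal r < ereal e" using re by simp
    ultimately have Rx: "ereal r < R0 X0 x" by (rule order.strict_trans2[rotated])
    have xX: "x \<in> X0" using xU UX by blast
    have xW: "x \<in> W" unfolding W_def using r0 by simp
    define g where "g n = trunc mu W h n" for n
    define dd where "dd n y = h y - g n y" for n y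
    have gb: "g n \<in> Harm_bplus mu W" for n unfolding g_def by (rule trunc_bplus[OF kf W0 h hp])
    have gc: "continuous_on W (g n)" for n using C W0 gb by blast
    have ddH: "dd n \<in> Harm_plus mu (ball x r)" for n
    proof -
      have gH: "univ_meas_fun (g n)" "\<And>V y. V \<in> UU W \<Longrightarrow> y \<in> V \<Longrightarrow> integrable (completion (mu y V)) (g n) \<and>
        (\<integral>u. g n u \<partial>completion (mu y V)) = g n y"
        using gb[of n] unfolding Harm_bplus_def Harm_plus_def Harm_def by auto
      have um: "univ_meas_fun (dd n)"
        using h gH(1) unfolding univ_meas_fun_def dd_def by (auto intro: borel_measurable_diff)
      have harm: "integrable (completion (mu y V)) (dd n) \<and> (\<integral>u. dd n u \<partial>completion (mu y V)) = dd n y"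
        if V: "V \<in> UU W" and y: "y \<in> V" for V y
      proof -
        have VU: "V \<in> UU U" by (rule UU_trans(1)[OF V WU])
        show ?thesis using hh[OF VU y] gH(2)[OF V y] unfolding dd_def by auto
      qed
      have nn: "0 \<le> dd n y" for y
      proof (cases "y \<in> W")
        case True
        have "integrable (completion (mu y W)) h" "(\<integral>u. h u \<partial>completion (mu y W)) = h y"
          using hh[OF WU True] by auto
        then show ?thesis using trunc_le[OF kf W0 h hp, of y n] unfolding dd_def g_def by simp
      next
        case False
        then show ?thesis using trunc_out[OF kf W0 h False, of n] unfolding dd_def g_def by simp
      qed
      show ?thesis unfolding Harm_plus_def Harm_def using um harm nn unfolding W_def by blast
    qed
    have hn: "harnack \<alpha> K (dd n) x r" for n using P1 xX r0 Rx ddH by blast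
    have xB: "x \<in> ball x (\<alpha> * r)" using a r0 by simp
    have ddle: "dd n y \<le> K * dd n x" if "y \<in> ball x (\<alpha> * r)" for n y
      by (rule pairs_from_harnack[OF _ hn that xB]) (use K in simp)
    have hx: "integrable (completion (mu x W)) h" "(\<integral>u. h u \<partial>completion (mu x W)) = h x"
      using hh[OF WU xW] by auto
    have "(\<lambda>n. g n x) \<longlonglongrightarrow> h x"
      using trunc_conv[OF kf W0 h hp hx(1)] hx(2) unfolding g_def by simp
    then have "(\<lambda>n. K * dd n x) \<longlonglongrightarrow> K * (h x - h x)"
      unfolding dd_def by (intro tendsto_intros)
    then have ddlim: "(\<lambda>n. K * dd n x) \<longlonglongrightarrow> 0" by simp
    have ddnn: "0 \<le> dd n y" for n y using ddH[of n] unfolding Harm_plus_def by blast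
    show "isCont h x" unfolding continuous_at_ball
    proof (intro allI impI)
      fix \<epsilon> :: real assume \<epsilon>: "0 < \<epsilon>"
      have e3: "0 < \<epsilon> / 3" using \<epsilon> by simp
      obtain no where no: "\<forall>n\<ge>no. norm (K * dd n x - 0) < \<epsilon> / 3"
        using LIMSEQ_D[OF ddlim e3] by blast
      define n where "n = no"
      have n: "K * dd n x < \<epsilon> / 3" using no unfolding n_def by auto
      have "1 * dd n x \<le> K * dd n x" by (rule mult_right_mono[OF K ddnn])
      then have ddx: "dd n x < \<epsilon> / 3" using n by simp
      have "isCont (g n) x" using gc[of n] xW unfolding W_def continuous_on_eq_continuous_at[OF open_ball] by blast
      then obtain \<delta> where \<delta>: "0 < \<delta>" "g n ` ball x \<delta> \<subseteq> ball (g n x) (\<epsilon> / 3)"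
        unfolding continuous_at_ball using e3 by blast
      show "\<exists>\<delta>>0. h ` ball x \<delta> \<subseteq> ball (h x) \<epsilon>"
      proof (intro exI[of _ "min \<delta> (\<alpha> * r)"] conjI)
        show "0 < min \<delta> (\<alpha> * r)" using \<delta>(1) a r0 by simp
        show "h ` ball x (min \<delta> (\<alpha> * r)) \<subseteq> ball (h x) \<epsilon>"
        proof
          fix v assume "v \<in> h ` ball x (min \<delta> (\<alpha> * r))"
          then obtain y where v: "v = h y" and y: "y \<in> ball x (min \<delta> (\<alpha> * r))" by blast
          have y1: "y \<in> ball x \<delta>" and y2: "y \<in> ball x (\<alpha> * r)" using y by auto
          have "g n y \<in> ball (g n x) (\<epsilon> / 3)" using \<delta>(2) y1 by blast
          then have "dist (g n x) (g n y) < \<epsilon> / 3" by simp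
          moreover have "dd n y < \<epsilon> / 3" using ddle[OF y2, of n] n by simp
          moreover have "0 \<le> dd n y" "0 \<le> dd n x" by (rule ddnn)+
          ultimately have "\<bar>h x - h y\<bar> < \<epsilon>" using ddx unfolding dd_def dist_real_def by linarith
          then show "v \<in> ball (h x) \<epsilon>" unfolding v by (simp add: dist_real_def)
        qed
      qed
    qed
  qed
qed


theorem proposition3p1:
  fixes mu :: "'a::metric_space \<Rightarrow> 'a set \<Rightarrow> 'a measure"
    and X0 :: "'a set" and \<alpha> K :: real
  assumes "separable_space (euclidean :: 'a topology)"
    and "open X0"
    and "kernel_family X0 mu"
    and "0 < \<alpha>" and "\<alpha> < 1" and "1 \<le> K"
    and "\<forall>x0 R h. x0 \<in> X0 \<longrightarrow> 0 < R \<longrightarrow> ereal R < R0 X0 x0 \<longrightarrow>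
            h \<in> Harm_bplus mu (ball x0 R) \<longrightarrow> harnack \<alpha> K h x0 R"
  shows "(\<forall>x0 R h. x0 \<in> X0 \<longrightarrow> 0 < R \<longrightarrow> ereal R < R0 X0 x0 \<longrightarrow>
            h \<in> Harm_plus mu (ball x0 R) \<longrightarrow> harnack \<alpha> K h x0 R)
       \<and> ((\<forall>U \<in> UU X0. \<forall>h \<in> Harm_bplus mu U. continuous_on U h) \<longrightarrow>
          (\<forall>U \<in> UU X0. \<forall>h \<in> Harm_plus mu U. continuous_on U h))"
proof -
  have P1: "\<forall>x0 R h. x0 \<in> X0 \<longrightarrow> 0 < R \<longrightarrow> ereal R < R0 X0 x0 \<longrightarrow>
            h \<in> Harm_plus mu (ball x0 R) \<longrightarrow> harnack \<alpha> K h x0 R"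
    using part1[OF assms(3) assms(4) assms(5) assms(6) assms(7)] by blast
  moreover have "(\<forall>U \<in> UU X0. \<forall>h \<in> Harm_bplus mu U. continuous_on U h) \<longrightarrow>
          (\<forall>U \<in> UU X0. \<forall>h \<in> Harm_plus mu U. continuous_on U h)"
    using part2[OF assms(3) assms(4) assms(6) P1] by blast
  ultimately show ?thesis by blast
qed

end
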